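(* Let $(V_0,V_1,V_2,V_3,w)$ be a geometric quintuple. Then for $w$ in a nonempty Zariski open subset $\mathcal{U}'$ (of the space of such tensors, up to the scaling action of $\mathbb{G}_m^4$), the linear map $\langle-,w\rangle\colon V_2^\vee\otimes V_3^\vee\to V_0\otimes V_1$ (contraction with $w$ in the last two factors) is an isomorphism, and hence $$\square_w=(V_0\otimes V_1,\,V_0,\,V_1,\,V_2^\vee,\,V_3^\vee,\,\mathrm{id},\,\phi_w),\qquad \phi_w=\langle-,w\rangle^{-1},$$ is a geometric square.
   Context: $k$ is algebraically closed of characteristic $0$. A quintuple $(V_0,V_1,V_2,V_3,W)$, with $V_i$ $2$-dimensional vector spaces and $0\neq W=kw\subset V_0\otimes V_1\otimes V_2\otimes V_3$, is geometric if for all $j\in\{0,1,2,3\}$ and all nonzero $\phi_j\in V_j^\vee$, $\phi_{j+1}\in V_{j+1}^\vee$ (indices mod 4), the contraction $\langle\phi_j\otimes\phi_{j+1},w\rangle$ is nonzero; the quintuple is identified with $w$. A geometric square is a septuple $(V,U_0^0,U_1^0,U_0^1,U_1^1,\phi_0,\phi_1)$ with $V$ a $4$-dimensional vector space, $U_i^j$ $2$-dimensional vector spaces and $\phi_i\colon V\to U_0^i\otimes U_1^i$ isomorphisms. *)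

theory Defs
  imports "HOL-Computational_Algebra.Polynomial"
begin

text \<open>Coordinates: each V_i is identified with k^2 (basis indexed by bool), so a tensor
 w in V_0 (x) V_1 (x) V_2 (x) V_3 is a function w a b c d, and a dual vector phi in V_i^dual
 is a function bool => k (pairing sum_a phi a * v a).\<close>

type_synonym 'k tensor4 = "bool \<Rightarrow> bool \<Rightarrow> bool \<Rightarrow> bool \<Rightarrow> 'k"

definition alg_closed :: "'k::field itself \<Rightarrow> bool" where
  "alg_closed _ \<longleftrightarrow> (\<forall>p :: 'k poly. degree p \<ge> 1 \<longrightarrow> (\<exists>x. poly p x = 0))"

definition nonzero_fun :: "(bool \<Rightarrow> 'k::zero) \<Rightarrow> bool" where
  "nonzero_fun f \<longleftrightarrow> (\<exists>a. f a \<noteq> 0)"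

definition contr01 :: "(bool \<Rightarrow> 'k::comm_ring) \<Rightarrow> (bool \<Rightarrow> 'k) \<Rightarrow> 'k tensor4 \<Rightarrow> bool \<Rightarrow> bool \<Rightarrow> 'k" where
  "contr01 f g w c d = (\<Sum>a\<in>UNIV. \<Sum>b\<in>UNIV. f a * g b * w a b c d)"
definition contr12 :: "(bool \<Rightarrow> 'k::comm_ring) \<Rightarrow> (bool \<Rightarrow> 'k) \<Rightarrow> 'k tensor4 \<Rightarrow> bool \<Rightarrow> bool \<Rightarrow> 'k" where
  "contr12 f g w a d = (\<Sum>b\<in>UNIV. \<Sum>c\<in>UNIV. f b * g c * w a b c d)"
definition contr23 :: "(bool \<Rightarrow> 'k::comm_ring) \<Rightarrow> (bool \<Rightarrow> 'k) \<Rightarrow> 'k tensor4 \<Rightarrow> bool \<Rightarrow> bool \<Rightarrow> 'k" where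
  "contr23 f g w a b = (\<Sum>c\<in>UNIV. \<Sum>d\<in>UNIV. f c * g d * w a b c d)"
definition contr30 :: "(bool \<Rightarrow> 'k::comm_ring) \<Rightarrow> (bool \<Rightarrow> 'k) \<Rightarrow> 'k tensor4 \<Rightarrow> bool \<Rightarrow> bool \<Rightarrow> 'k" where
  "contr30 f g w b c = (\<Sum>d\<in>UNIV. \<Sum>a\<in>UNIV. f d * g a * w a b c d)"

definition nonzero2 :: "(bool \<Rightarrow> bool \<Rightarrow> 'k::zero) \<Rightarrow> bool" where
  "nonzero2 t \<longleftrightarrow> (\<exists>a b. t a b \<noteq> 0)"

definition geometric :: "'k::comm_ring tensor4 \<Rightarrow> bool" where
  "geometric w \<longleftrightarrow>
     (\<forall>f g. nonzero_fun f \<longrightarrow> nonzero_fun g \<longrightarrow>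
        nonzero2 (contr01 f g w) \<and> nonzero2 (contr12 f g w) \<and>
        nonzero2 (contr23 f g w) \<and> nonzero2 (contr30 f g w))"

definition contr_map :: "'k::comm_ring tensor4 \<Rightarrow> (bool \<Rightarrow> bool \<Rightarrow> 'k) \<Rightarrow> bool \<Rightarrow> bool \<Rightarrow> 'k" where
  "contr_map w psi a b = (\<Sum>c\<in>UNIV. \<Sum>d\<in>UNIV. psi c d * w a b c d)"

inductive tensor_poly :: "('k::comm_ring_1 tensor4 \<Rightarrow> 'k) \<Rightarrow> bool" where
  const: "tensor_poly (\<lambda>w. c)"
| coord: "tensor_poly (\<lambda>w. w a b c d)"
| add: "tensor_poly P \<Longrightarrow> tensor_poly Q \<Longrightarrow> tensor_poly (\<lambda>w. P w + Q w)"
| mult: "tensor_poly P \<Longrightarrow> tensor_poly Q \<Longrightarrow> tensor_poly (\<lambda>w. P w * Q w)"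

definition zariski_open :: "'k::comm_ring_1 tensor4 set \<Rightarrow> bool" where
  "zariski_open U \<longleftrightarrow> (\<exists>F. (\<forall>P\<in>F. tensor_poly P) \<and> U = {w. \<exists>P\<in>F. P w \<noteq> 0})"

end

theory Submission
  imports Defs "HOL-Analysis.Analysis"
begin

lemma sum_pair_bool: "(\<Sum>j\<in>(UNIV::(bool\<times>bool) set). h j) = (\<Sum>a\<in>UNIV. \<Sum>b\<in>UNIV. h (a,b))"
  by (simp add: UNIV_Times_UNIV[symmetric] sum.cartesian_product del: UNIV_Times_UNIV)

lemma tensor_poly_sum: "finite S \<Longrightarrow> (\<forall>x\<in>S. tensor_poly (P x)) \<Longrightarrow> tensor_poly (\<lambda>w. \<Sum>x\<in>S. P x w)"
proof (induction S rule: finite_induct)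
  case empty then show ?case by (simp add: tensor_poly.const)
next
  case (insert x F) then show ?case by (simp add: tensor_poly.add)
qed

lemma tensor_poly_prod: "finite S \<Longrightarrow> (\<forall>x\<in>S. tensor_poly (P x)) \<Longrightarrow> tensor_poly (\<lambda>w. \<Prod>x\<in>S. P x w)"
proof (induction S rule: finite_induct)
  case empty then show ?case by (simp add: tensor_poly.const)
next
  case (insert x F) then show ?case by (simp add: tensor_poly.mult)
qed

lemma tensor_poly_det:
  assumes "\<And>i j. tensor_poly (\<lambda>w. (M w :: 'k::comm_ring_1^'n::finite^'n)$i$j)"
  shows "tensor_poly (\<lambda>w. det (M w))"
  unfolding det_def
  apply (rule tensor_poly_sum)
   apply (simp add: finite_permutations)
  apply (intro ballI tensor_poly.mult tensor_poly.const)
  apply (rule tensor_poly_prod)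
  using assms by auto

definition M01 :: "'k tensor4 \<Rightarrow> 'k^(bool\<times>bool)^(bool\<times>bool)" where
  "M01 w = (\<chi> i. \<chi> j. w (fst j) (snd j) (fst i) (snd i))"
definition M12 :: "'k tensor4 \<Rightarrow> 'k^(bool\<times>bool)^(bool\<times>bool)" where
  "M12 w = (\<chi> i. \<chi> j. w (fst i) (fst j) (snd j) (snd i))"
definition M23 :: "'k tensor4 \<Rightarrow> 'k^(bool\<times>bool)^(bool\<times>bool)" where
  "M23 w = (\<chi> i. \<chi> j. w (fst i) (snd i) (fst j) (snd j))"
definition M30 :: "'k tensor4 \<Rightarrow> 'k^(bool\<times>bool)^(bool\<times>bool)" where
  "M30 w = (\<chi> i. \<chi> j. w (snd j) (fst i) (snd i) (fst j))"

definition tv :: "(bool \<Rightarrow> 'k) \<Rightarrow> (bool \<Rightarrow> 'k) \<Rightarrow> 'k::times^(bool\<times>bool)" where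
  "tv f g = (\<chi> j. f (fst j) * g (snd j))"

lemma c01: "(M01 w *v tv f g)$(c,d) = contr01 f g (w::'k::comm_ring_1 tensor4) c d"
  by (simp add: M01_def tv_def matrix_vector_mult_def contr01_def sum_pair_bool mult_ac)
lemma c12: "(M12 w *v tv f g)$(a,d) = contr12 f g (w::'k::comm_ring_1 tensor4) a d"
  by (simp add: M12_def tv_def matrix_vector_mult_def contr12_def sum_pair_bool mult_ac)
lemma c23: "(M23 w *v tv f g)$(a,b) = contr23 f g (w::'k::comm_ring_1 tensor4) a b"
  by (simp add: M23_def tv_def matrix_vector_mult_def contr23_def sum_pair_bool mult_ac)
lemma c30: "(M30 w *v tv f g)$(b,c) = contr30 f g (w::'k::comm_ring_1 tensor4) b c"
  by (simp add: M30_def tv_def matrix_vector_mult_def contr30_def sum_pair_bool mult_ac)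

lemma inv_inj: "invertible (A::'k::field^'n::finite^'n) \<Longrightarrow> A *v x = 0 \<Longrightarrow> x = 0"
  by (metis invertible_def matrix_vector_mul_assoc matrix_vector_mul_lid matrix_vector_mult_0_right)

lemma tv_nz:
  assumes "nonzero_fun f" "nonzero_fun (g::bool \<Rightarrow> 'k::field)"
  shows "tv f g \<noteq> 0"
proof
  assume h: "tv f g = 0"
  obtain a b where "f a \<noteq> 0" "g b \<noteq> 0" using assms by (auto simp: nonzero_fun_def)
  moreover have "(tv f g)$(a,b) = 0" using h by simp
  ultimately show False by (simp add: tv_def)
qed

lemma nz_from_inv:
  assumes "invertible (A::'k::field^(bool\<times>bool)^(bool\<times>bool))" "nonzero_fun f" "nonzero_fun g"
    and "\<And>x y. (A *v tv f g)$(x,y) = t x y"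
  shows "nonzero2 t"
proof (rule ccontr)
  assume "\<not> nonzero2 t"
  then have "A *v tv f g = 0" using assms(4) by (auto simp: nonzero2_def vec_eq_iff)
  then show False using inv_inj[OF assms(1)] tv_nz[OF assms(2,3)] by blast
qed

lemma inv_scale:
  assumes "invertible (A::'k::field^'n::finite^'n)" "s \<noteq> 0"
  shows "invertible (\<chi> i j. s * A$i$j)"
proof -
  obtain B where B: "A ** B = mat 1" "B ** A = mat 1" using assms(1) invertible_def by blast
  have e1: "(\<chi> i j. s * A$i$j) ** (\<chi> i j. inverse s * B$i$j) = A ** B"
    apply (simp add: matrix_matrix_mult_def vec_eq_iff, intro allI sum.cong refl)
    using assms(2) by (simp add: field_simps)
  have e2: "(\<chi> i j. inverse s * B$i$j) ** (\<chi> i j. s * A$i$j) = B ** A"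
    apply (simp add: matrix_matrix_mult_def vec_eq_iff, intro allI sum.cong refl)
    using assms(2) by (simp add: field_simps)
  show ?thesis unfolding invertible_def
    by (rule exI[of _ "\<chi> i j. inverse s * B$i$j"]) (simp only: e1 e2 B)
qed

definition good :: "'k::field tensor4 \<Rightarrow> bool" where
  "good w \<longleftrightarrow> invertible (M01 w) \<and> invertible (M12 w) \<and> invertible (M23 w) \<and> invertible (M30 w)"

definition Pd :: "'k::field tensor4 \<Rightarrow> 'k" where
  "Pd w = det (M01 w) * det (M12 w) * det (M23 w) * det (M30 w)"

lemma Pd_good: "Pd w \<noteq> 0 \<longleftrightarrow> good w"
  by (simp add: Pd_def good_def invertible_det_nz)

lemma Pd_poly: "tensor_poly (Pd :: 'k::field tensor4 \<Rightarrow> 'k)"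
proof -
  have "tensor_poly (\<lambda>w. det (M01 w) * det (M12 w) * det (M23 w) * det (M30 w) :: 'k)"
    by (intro tensor_poly.mult tensor_poly_det)
       (simp_all add: M01_def M12_def M23_def M30_def tensor_poly.coord)
  then show ?thesis by (simp add: Pd_def[abs_def])
qed

lemma good_scale:
  assumes "good w" "(s::'k::field) \<noteq> 0"
  shows "good (\<lambda>a b c d. s * w a b c d)"
proof -
  have eqs: "M01 (\<lambda>a b c d. s * w a b c d) = (\<chi> i j. s * (M01 w)$i$j)"
       "M12 (\<lambda>a b c d. s * w a b c d) = (\<chi> i j. s * (M12 w)$i$j)"
       "M23 (\<lambda>a b c d. s * w a b c d) = (\<chi> i j. s * (M23 w)$i$j)"
       "M30 (\<lambda>a b c d. s * w a b c d) = (\<chi> i j. s * (M30 w)$i$j)"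
    by (simp_all add: M01_def M12_def M23_def M30_def)
  show ?thesis unfolding good_def eqs using assms inv_scale unfolding good_def by blast
qed

lemma good_geometric: "good w \<Longrightarrow> geometric w"
  unfolding geometric_def good_def
  by (auto intro: nz_from_inv c01 c12 c23 c30)

definition toV :: "(bool \<Rightarrow> bool \<Rightarrow> 'k) \<Rightarrow> 'k^(bool\<times>bool)" where
  "toV p = (\<chi> j. p (fst j) (snd j))"

lemma cm: "M23 w *v toV psi = (\<chi> i. contr_map (w::'k::comm_ring_1 tensor4) psi (fst i) (snd i))"
  by (simp add: vec_eq_iff M23_def toV_def matrix_vector_mult_def contr_map_def sum_pair_bool mult_ac)

lemma good_bij:
  assumes "good (w::'k::field tensor4)"
  shows "bij (contr_map w)"
proof -
  obtain B where B: "M23 w ** B = mat 1" "B ** M23 w = mat 1"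
    using assms invertible_def good_def by blast
  have "inj (contr_map w)"
  proof
    fix p q assume "contr_map w p = contr_map w q"
    then have "M23 w *v toV p = M23 w *v toV q" by (simp add: cm)
    then have "B *v (M23 w *v toV p) = B *v (M23 w *v toV q)" by simp
    then have "toV p = toV q" by (simp add: matrix_vector_mul_assoc B)
    then show "p = q" by (auto simp: toV_def vec_eq_iff fun_eq_iff)
  qed
  moreover have "surj (contr_map w)"
  proof (rule surjI)
    fix y :: "bool \<Rightarrow> bool \<Rightarrow> 'k"
    define x where "x = B *v (\<chi> i. y (fst i) (snd i))"
    have tx: "toV (\<lambda>c d. x$(c,d)) = x" by (simp add: toV_def vec_eq_iff)
    have "M23 w *v x = (\<chi> i. y (fst i) (snd i))"
      by (simp add: x_def matrix_vector_mul_assoc B)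
    then have "(\<chi> i. contr_map w (\<lambda>c d. x$(c,d)) (fst i) (snd i)) = (\<chi> i. y (fst i) (snd i))"
      using cm[of w "\<lambda>c d. x$(c,d)"] tx by simp
    then show "contr_map w (\<lambda>c d. x$(c,d)) = y"
      by (auto simp: vec_eq_iff fun_eq_iff)
  qed
  ultimately show ?thesis by (simp add: bij_def)
qed

definition w0 :: "'k::field tensor4" where
  "w0 a b c d = (if c = a \<and> d = b then 1 else 0)"

lemma good_w0: "good (w0 :: 'k::field tensor4)"
proof -
  have id: "M01 (w0::'k tensor4) = mat 1" "M23 (w0::'k tensor4) = mat 1" "M30 (w0::'k tensor4) = mat 1"
    by (auto simp: M01_def M23_def M30_def w0_def mat_def vec_eq_iff prod_eq_iff)
  have sw: "M12 (w0::'k tensor4) ** M12 w0 = mat 1"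
    by (auto simp: M12_def w0_def mat_def vec_eq_iff matrix_matrix_mult_def sum_pair_bool prod_eq_iff UNIV_bool)
  have i1: "invertible (mat 1 :: 'k^(bool\<times>bool)^(bool\<times>bool))"
    unfolding invertible_def by (rule exI[of _ "mat 1"]) simp
  show ?thesis unfolding good_def id using i1 sw invertible_def by blast
qed

theorem proposition3p13:
  assumes "alg_closed TYPE('k::field_char_0)"
  shows "\<exists>U :: 'k tensor4 set.
           zariski_open U \<and> U \<noteq> {} \<and>
           (\<forall>w\<in>U. \<forall>t0 t1 t2 t3. t0 \<noteq> 0 \<longrightarrow> t1 \<noteq> 0 \<longrightarrow> t2 \<noteq> 0 \<longrightarrow> t3 \<noteq> 0 \<longrightarrow>
               (\<lambda>a b c d. (t0 * t1 * t2 * t3) * w a b c d) \<in> U) \<and>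
           (\<forall>w\<in>U. geometric w \<and> bij (contr_map w))"
proof (intro exI[of _ "{w. good w}"] conjI)
  show "zariski_open {w :: 'k tensor4. good w}"
    unfolding zariski_open_def
    by (rule exI[of _ "{Pd}"]) (simp add: Pd_poly Pd_good)
  show "{w :: 'k tensor4. good w} \<noteq> {}" using good_w0 by blast
  show "\<forall>w\<in>{w :: 'k tensor4. good w}. \<forall>t0 t1 t2 t3. t0 \<noteq> 0 \<longrightarrow> t1 \<noteq> 0 \<longrightarrow> t2 \<noteq> 0 \<longrightarrow> t3 \<noteq> 0 \<longrightarrow>
               (\<lambda>a b c d. (t0 * t1 * t2 * t3) * w a b c d) \<in> {w. good w}"
    by (auto intro!: good_scale)
  show "\<forall>w\<in>{w :: 'k tensor4. good w}. geometric w \<and> bij (contr_map w)"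
    by (auto intro: good_geometric good_bij)
qed

end
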